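(* Let $X$ be a real reflexive Banach space, let $T:X\rightrightarrows X^{\ast}$ be maximally monotone, and let $h\in\mathcal{H}(T)$. Then $\breve{T}_h=L^{\mathcal{A}h}$, and $\breve{T}_h\in\mathbb{E}(T)$.
   Context: $X^{\ast}$ is the dual of $X$ with pairing $\langle\cdot,\cdot\rangle$; $\mathbb{R}_+=[0,\infty)$. The dual of $X\times X^{\ast}$ is identified with $X^{\ast}\times X$ via $\langle (x,x^{\ast}),(y^{\ast},y)\rangle=\langle x,y^{\ast}\rangle+\langle y,x^{\ast}\rangle$; for $g:X\times X^{\ast}\to\mathbb{R}\cup\{+\infty\}$, $g^{\ast}(y^{\ast},y)=\sup_{(x,x^{\ast})}\{\langle x,y^{\ast}\rangle+\langle y,x^{\ast}\rangle-g(x,x^{\ast})\}$, and $i(x,x^{\ast})=(x^{\ast},x)$. $\mathcal{H}(T)$ is the family of lower semicontinuous convex $h:X\times X^{\ast}\to\mathbb{R}\cup\{+\infty\}$ with $h(x,x^{\ast})\ge\langle x,x^{\ast}\rangle$ everywhere and equality whenever $x^{\ast}\in T(x)$. $\mathcal{A}h:=\tfrac12(h+h^{\ast}\circ i)$. For $\eta\ge0$ and $z=(x,x^{\ast})$ with $h(z)<\infty$, the $\eta$-subdifferential is $\partial_\eta h(z)=\{(y^{\ast},y)\in X^{\ast}\times X: h(w,w^{\ast})\ge h(z)+\langle w-x,y^{\ast}\rangle+\langle y,w^{\ast}-x^{\ast}\rangle-\eta\ \forall (w,w^{\ast})\}$, and $\partial_\eta h(z)=\emptyset$ if $h(z)=+\infty$.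 Define $\breve{T}_h:\mathbb{R}_+\times X\rightrightarrows X^{\ast}$ by $\breve{T}_h(\epsilon,x)=\{x^{\ast}:(x^{\ast},x)\in\partial_{2\epsilon}h(x,x^{\ast})\}$. For $g\in\mathcal{H}(T)$, $L^{g}(\epsilon,x):=\{x^{\ast}: g(x,x^{\ast})\le\langle x,x^{\ast}\rangle+\epsilon\}$. $\mathbb{E}(T)$ is the family of $E:\mathbb{R}_+\times X\rightrightarrows X^{\ast}$ such that: $(E_1)$ $T(x)\subset E(\epsilon,x)$ for all $\epsilon\ge0$, $x$; $(E_2)$ $E(\epsilon_1,x)\subset E(\epsilon_2,x)$ whenever $0\le\epsilon_1\le\epsilon_2$; $(E_3)$ if $x_1^{\ast}\in E(\epsilon_1,x_1)$, $x_2^{\ast}\in E(\epsilon_2,x_2)$, $\alpha\in[0,1]$, $\hat x=\alpha x_1+(1-\alpha)x_2$, $\hat x^{\ast}=\alpha x_1^{\ast}+(1-\alpha)x_2^{\ast}$, and $\epsilon=\alpha\epsilon_1+(1-\alpha)\epsilon_2+\alpha(1-\alpha)\langle x_1-x_2,x_1^{\ast}-x_2^{\ast}\rangle$, then $\epsilon\ge0$ and $\hat x^{\ast}\in E(\epsilon,\hat x)$. *)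

theory Defs
  imports "HOL-Analysis.Analysis"
begin

text \<open>The dual space X* is modelled as the bounded linear functionals;
 the pairing is blinfun_apply. Extended-real valued functions use ereal.\<close>

definition reflexive_space :: "'a::real_normed_vector itself \<Rightarrow> bool" where
  "reflexive_space (TYPE('a)) \<longleftrightarrow>
     (\<forall>\<phi> :: ('a \<Rightarrow>\<^sub>L real) \<Rightarrow>\<^sub>L real. \<exists>x::'a. \<forall>f. blinfun_apply \<phi> f = blinfun_apply f x)"

definition monotone_op :: "('a::real_normed_vector \<Rightarrow> ('a \<Rightarrow>\<^sub>L real) set) \<Rightarrow> bool" where
  "monotone_op T \<longleftrightarrow> (\<forall>x y xs ys. xs \<in> T x \<longrightarrow> ys \<in> T y \<longrightarrow> blinfun_apply (xs - ys) (x - y) \<ge> 0)"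

definition maximal_monotone :: "('a::real_normed_vector \<Rightarrow> ('a \<Rightarrow>\<^sub>L real) set) \<Rightarrow> bool" where
  "maximal_monotone T \<longleftrightarrow> monotone_op T \<and>
     (\<forall>S. monotone_op S \<longrightarrow> (\<forall>x. T x \<subseteq> S x) \<longrightarrow> S = T)"

definition lsc_fun :: "('b::topological_space \<Rightarrow> ereal) \<Rightarrow> bool" where
  "lsc_fun h \<longleftrightarrow> (\<forall>c::ereal. closed {z. h z \<le> c})"

definition convex_ereal :: "('b::real_vector \<Rightarrow> ereal) \<Rightarrow> bool" where
  "convex_ereal h \<longleftrightarrow> (\<forall>z w (a::real). 0 < a \<longrightarrow> a < 1 \<longrightarrow>
      h (a *\<^sub>R z + (1 - a) *\<^sub>R w) \<le> ereal a * h z + ereal (1 - a) * h w)"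

definition HH :: "('a::real_normed_vector \<Rightarrow> ('a \<Rightarrow>\<^sub>L real) set) \<Rightarrow> ('a \<times> ('a \<Rightarrow>\<^sub>L real) \<Rightarrow> ereal) set" where
  "HH T = {h. lsc_fun h \<and> convex_ereal h \<and>
      (\<forall>x xs. h (x, xs) \<ge> ereal (blinfun_apply xs x)) \<and>
      (\<forall>x xs. xs \<in> T x \<longrightarrow> h (x, xs) = ereal (blinfun_apply xs x))}"

text \<open>Fenchel conjugate on X \<times> X*, evaluated at (y*, y) in X* \<times> X.\<close>
definition fconj :: "('a::real_normed_vector \<times> ('a \<Rightarrow>\<^sub>L real) \<Rightarrow> ereal) \<Rightarrow> ('a \<Rightarrow>\<^sub>L real) \<times> 'a \<Rightarrow> ereal" where
  "fconj g = (\<lambda>(ys, y). SUP p\<in>UNIV. ereal (blinfun_apply ys (fst p) + blinfun_apply (snd p) y) - g p)"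

definition iswap :: "'a \<times> 'b \<Rightarrow> 'b \<times> 'a" where
  "iswap = (\<lambda>(x, xs). (xs, x))"

definition AA :: "('a::real_normed_vector \<times> ('a \<Rightarrow>\<^sub>L real) \<Rightarrow> ereal) \<Rightarrow> 'a \<times> ('a \<Rightarrow>\<^sub>L real) \<Rightarrow> ereal" where
  "AA h = (\<lambda>z. ereal (1/2) * (h z + fconj h (iswap z)))"

definition esubdiff :: "('a::real_normed_vector \<times> ('a \<Rightarrow>\<^sub>L real) \<Rightarrow> ereal) \<Rightarrow> real \<Rightarrow> 'a \<times> ('a \<Rightarrow>\<^sub>L real) \<Rightarrow> (('a \<Rightarrow>\<^sub>L real) \<times> 'a) set" where
  "esubdiff h \<eta> z = (if h z = \<infinity> then {} else
     {(ys, y). \<forall>w ws. h (w, ws) \<ge> h z + ereal (blinfun_apply ys (w - fst z) + blinfun_apply (ws - snd z) y - \<eta>)})"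

definition Tbreve :: "('a::real_normed_vector \<times> ('a \<Rightarrow>\<^sub>L real) \<Rightarrow> ereal) \<Rightarrow> real \<Rightarrow> 'a \<Rightarrow> ('a \<Rightarrow>\<^sub>L real) set" where
  "Tbreve h \<epsilon> x = {xs. (xs, x) \<in> esubdiff h (2 * \<epsilon>) (x, xs)}"

definition Lg :: "('a::real_normed_vector \<times> ('a \<Rightarrow>\<^sub>L real) \<Rightarrow> ereal) \<Rightarrow> real \<Rightarrow> 'a \<Rightarrow> ('a \<Rightarrow>\<^sub>L real) set" where
  "Lg g \<epsilon> x = {xs. g (x, xs) \<le> ereal (blinfun_apply xs x + \<epsilon>)}"

text \<open>The family E(T) of enlargements (maps defined on R_+ \<times> X; only \<epsilon> \<ge> 0 matters).\<close>
definition EE :: "('a::real_normed_vector \<Rightarrow> ('a \<Rightarrow>\<^sub>L real) set) \<Rightarrow> (real \<Rightarrow> 'a \<Rightarrow> ('a \<Rightarrow>\<^sub>L real) set) set" where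
  "EE T = {E.
     (\<forall>\<epsilon> x. 0 \<le> \<epsilon> \<longrightarrow> T x \<subseteq> E \<epsilon> x) \<and>
     (\<forall>\<epsilon>1 \<epsilon>2 x. 0 \<le> \<epsilon>1 \<longrightarrow> \<epsilon>1 \<le> \<epsilon>2 \<longrightarrow> E \<epsilon>1 x \<subseteq> E \<epsilon>2 x) \<and>
     (\<forall>\<epsilon>1 \<epsilon>2 x1 x2 x1s x2s (\<alpha>::real). 0 \<le> \<epsilon>1 \<longrightarrow> 0 \<le> \<epsilon>2 \<longrightarrow>
        x1s \<in> E \<epsilon>1 x1 \<longrightarrow> x2s \<in> E \<epsilon>2 x2 \<longrightarrow> 0 \<le> \<alpha> \<longrightarrow> \<alpha> \<le> 1 \<longrightarrow>
        (let xh = \<alpha> *\<^sub>R x1 + (1 - \<alpha>) *\<^sub>R x2;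
             xhs = \<alpha> *\<^sub>R x1s + (1 - \<alpha>) *\<^sub>R x2s;
             \<epsilon> = \<alpha> * \<epsilon>1 + (1 - \<alpha>) * \<epsilon>2 + \<alpha> * (1 - \<alpha>) * blinfun_apply (x1s - x2s) (x1 - x2)
         in 0 \<le> \<epsilon> \<and> xhs \<in> E \<epsilon> xh))}"

end

theory Submission
  imports Defs
begin

lemma HH_ge: "h \<in> HH T \<Longrightarrow> ereal (blinfun_apply xs x) \<le> h (x, xs)"
  by (simp add: HH_def)

lemma HH_fin: assumes "h \<in> HH T" "h (x, xs) \<noteq> \<infinity>"
  obtains r where "h (x, xs) = ereal r"
proof -
  have "h (x, xs) \<noteq> -\<infinity>" using HH_ge[OF assms(1), of xs x] by auto
  with assms(2) show ?thesis using that by (cases "h (x, xs)") auto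
qed

lemma mem_Tbreve:
  assumes "h \<in> HH T"
  shows "xs \<in> Tbreve h \<epsilon> x \<longleftrightarrow> (\<exists>r. h (x, xs) = ereal r \<and>
     (\<forall>w ws s. h (w, ws) = ereal s \<longrightarrow>
        r + blinfun_apply xs w + blinfun_apply ws x - 2 * blinfun_apply xs x - 2 * \<epsilon> \<le> s))"
    (is "?L \<longleftrightarrow> ?R")
proof
  assume L: ?L
  hence ninf: "h (x, xs) \<noteq> \<infinity>" by (auto simp: Tbreve_def esubdiff_def)
  then obtain r where r: "h (x, xs) = ereal r" using HH_fin[OF assms] by blast
  have all: "\<forall>w ws. h (w, ws) \<ge> ereal r + ereal (blinfun_apply xs (w - x) + blinfun_apply (ws - xs) x - 2 * \<epsilon>)"
    using L ninf r by (auto simp: Tbreve_def esubdiff_def)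
  show ?R
  proof (intro exI conjI allI impI)
    fix w ws s assume s: "h (w, ws) = ereal s"
    from all[rule_format, of w ws] s show "r + blinfun_apply xs w + blinfun_apply ws x - 2 * blinfun_apply xs x - 2 * \<epsilon> \<le> s"
      by (simp add: blinfun.diff_left blinfun.diff_right)
  qed (rule r)
next
  assume ?R
  then obtain r where r: "h (x, xs) = ereal r" and R: "\<forall>w ws s. h (w, ws) = ereal s \<longrightarrow>
        r + blinfun_apply xs w + blinfun_apply ws x - 2 * blinfun_apply xs x - 2 * \<epsilon> \<le> s" by blast
  have "h (w, ws) \<ge> ereal r + ereal (blinfun_apply xs (w - x) + blinfun_apply (ws - xs) x - 2 * \<epsilon>)" for w ws
  proof (cases "h (w, ws) = \<infinity>")
    case False
    then obtain s where s: "h (w, ws) = ereal s" using HH_fin[OF assms] by blast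
    show ?thesis using R[rule_format, OF s] s by (simp add: blinfun.diff_left blinfun.diff_right)
  qed simp
  thus ?L using r by (simp add: Tbreve_def esubdiff_def)
qed

lemma fconj_at: "fconj h (iswap (x, xs)) = (SUP p\<in>UNIV. ereal (blinfun_apply xs (fst p) + blinfun_apply (snd p) x) - h p)"
  by (simp add: fconj_def iswap_def)

lemma part1:
  assumes hH: "h \<in> HH T"
  shows "Tbreve h \<epsilon> x = Lg (AA h) \<epsilon> x"
proof (intro set_eqI iffI)
  fix xs assume "xs \<in> Tbreve h \<epsilon> x"
  then obtain r where r: "h (x, xs) = ereal r" and R: "\<And>w ws s. h (w, ws) = ereal s \<Longrightarrow>
        r + blinfun_apply xs w + blinfun_apply ws x - 2 * blinfun_apply xs x - 2 * \<epsilon> \<le> s"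
    using mem_Tbreve[OF hH] by blast
  let ?c = "2 * blinfun_apply xs x + 2 * \<epsilon> - r"
  have F: "fconj h (iswap (x, xs)) \<le> ereal ?c"
    unfolding fconj_at
  proof (rule SUP_least)
    fix p :: "'a \<times> ('a \<Rightarrow>\<^sub>L real)"
    obtain w ws where p: "p = (w, ws)" by (cases p)
    show "ereal (blinfun_apply xs (fst p) + blinfun_apply (snd p) x) - h p \<le> ereal ?c"
    proof (cases "h p = \<infinity>")
      case False
      then obtain s where s: "h (w, ws) = ereal s" using HH_fin[OF hH] p by blast
      show ?thesis using R[OF s] s p by simp
    qed simp
  qed
  have "AA h (x, xs) = ereal (1/2) * (ereal r + fconj h (iswap (x, xs)))"
    by (simp add: AA_def r)
  also have "\<dots> \<le> ereal (1/2) * (ereal r + ereal ?c)"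
    using add_left_mono[OF F, of "ereal r"] by (rule ereal_mult_left_mono) simp
  also have "\<dots> = ereal (blinfun_apply xs x + \<epsilon>)" by simp
  finally show "xs \<in> Lg (AA h) \<epsilon> x" by (simp add: Lg_def)
next
  fix xs assume "xs \<in> Lg (AA h) \<epsilon> x"
  hence A: "ereal (1/2) * (h (x, xs) + fconj h (iswap (x, xs))) \<le> ereal (blinfun_apply xs x + \<epsilon>)"
    by (simp add: Lg_def AA_def)
  have hn: "h (x, xs) \<noteq> \<infinity>"
  proof
    assume "h (x, xs) = \<infinity>" with A show False by simp
  qed
  then obtain r where r: "h (x, xs) = ereal r" using HH_fin[OF hH] by blast
  have Fge: "ereal (blinfun_apply xs x + blinfun_apply xs x) - ereal r \<le> fconj h (iswap (x, xs))"
    unfolding fconj_at using SUP_upper[of "(x, xs)" UNIV "\<lambda>p. ereal (blinfun_apply xs (fst p) + blinfun_apply (snd p) x) - h p"] r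
    by simp
  have Fn: "fconj h (iswap (x, xs)) \<noteq> \<infinity>"
  proof
    assume "fconj h (iswap (x, xs)) = \<infinity>" with A r show False by simp
  qed
  have "fconj h (iswap (x, xs)) \<noteq> -\<infinity>" using Fge by auto
  with Fn obtain f where f: "fconj h (iswap (x, xs)) = ereal f" by (cases "fconj h (iswap (x, xs))") auto
  from A r f have rf: "(r + f) / 2 \<le> blinfun_apply xs x + \<epsilon>" by simp
  have "\<forall>w ws s. h (w, ws) = ereal s \<longrightarrow>
        r + blinfun_apply xs w + blinfun_apply ws x - 2 * blinfun_apply xs x - 2 * \<epsilon> \<le> s"
  proof (intro allI impI)
    fix w ws s assume s: "h (w, ws) = ereal s"
    have "ereal (blinfun_apply xs w + blinfun_apply ws x) - ereal s \<le> ereal f"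
      using SUP_upper[of "(w, ws)" UNIV "\<lambda>p. ereal (blinfun_apply xs (fst p) + blinfun_apply (snd p) x) - h p"] s f
      unfolding fconj_at by simp
    thus "r + blinfun_apply xs w + blinfun_apply ws x - 2 * blinfun_apply xs x - 2 * \<epsilon> \<le> s"
      using rf by simp
  qed
  thus "xs \<in> Tbreve h \<epsilon> x" using mem_Tbreve[OF hH] r by blast
qed


lemma real_limit_aux:
  fixes A B s :: real
  assumes "\<And>t. 0 < t \<Longrightarrow> t < 1 \<Longrightarrow> A + t * B \<le> s"
  shows "A \<le> s"
proof (rule ccontr)
  assume "\<not> A \<le> s"
  define d where "d = A - s"
  have d: "d > 0" using \<open>\<not> A \<le> s\<close> by (simp add: d_def)
  define t where "t = d / (2 * (\<bar>B\<bar> + d))"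
  have den: "2 * (\<bar>B\<bar> + d) > 0" using d by simp
  have t0: "t > 0" using d den by (simp add: t_def)
  have t1: "t < 1" using d den by (simp add: t_def field_simps)
  have "t * \<bar>B\<bar> \<le> d / 2"
    using d den by (simp add: t_def field_simps)
  moreover have "- (t * \<bar>B\<bar>) \<le> t * B"
  proof -
    have "\<bar>t * B\<bar> = t * \<bar>B\<bar>" using t0 by (simp add: abs_mult)
    thus ?thesis using abs_ge_minus_self[of "t * B"] by linarith
  qed
  ultimately have "A + t * B > s" using d by (simp add: d_def)
  with assms[OF t0 t1] show False by simp
qed

lemma E1_lemma:
  assumes hH: "h \<in> HH T" and xT: "xs \<in> T x" and e: "0 \<le> \<epsilon>"
  shows "xs \<in> Tbreve h \<epsilon> x"
proof -
  have r: "h (x, xs) = ereal (blinfun_apply xs x)" using hH xT unfolding HH_def by blast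
  have cv: "convex_ereal h" using hH unfolding HH_def by blast
  have cv': "\<And>z w a. 0 < a \<Longrightarrow> a < 1 \<Longrightarrow>
      h (a *\<^sub>R z + (1 - a) *\<^sub>R w) \<le> ereal a * h z + ereal (1 - a) * h w"
    using cv unfolding convex_ereal_def by blast
  have "\<forall>w ws s. h (w, ws) = ereal s \<longrightarrow>
        blinfun_apply xs x + blinfun_apply xs w + blinfun_apply ws x - 2 * blinfun_apply xs x - 2 * \<epsilon> \<le> s"
  proof (intro allI impI)
    fix w ws s assume s: "h (w, ws) = ereal s"
    let ?A = "blinfun_apply xs w + blinfun_apply ws x - blinfun_apply xs x"
    let ?B = "blinfun_apply ws w - blinfun_apply ws x - blinfun_apply xs w + blinfun_apply xs x"
    have "?A + t * ?B \<le> s" if t: "0 < t" "t < 1" for t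
    proof -
      let ?p = "t *\<^sub>R (w, ws) + (1 - t) *\<^sub>R (x, xs)"
      have h1: "h ?p \<le> ereal t * h (w, ws) + ereal (1 - t) * h (x, xs)"
        by (rule cv'[OF t])
      have h2: "ereal t * h (w, ws) + ereal (1 - t) * h (x, xs) = ereal (t * s + (1 - t) * blinfun_apply xs x)"
        using s r by simp
      have h3: "ereal (blinfun_apply (snd ?p) (fst ?p)) \<le> h ?p"
        using HH_ge[OF hH, of "snd ?p" "fst ?p"] by (simp only: prod.collapse)
      have "ereal (blinfun_apply (snd ?p) (fst ?p)) \<le> ereal (t * s + (1 - t) * blinfun_apply xs x)"
        using order_trans[OF h3 h1[unfolded h2]] .
      hence "blinfun_apply (snd ?p) (fst ?p) \<le> t * s + (1 - t) * blinfun_apply xs x"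
        by simp
      hence "t * (t * blinfun_apply ws w + (1 - t) * blinfun_apply xs w) +
             (1 - t) * (t * blinfun_apply ws x + (1 - t) * blinfun_apply xs x)
             \<le> t * s + (1 - t) * blinfun_apply xs x"
        by (simp add: blinfun.add_left blinfun.scaleR_left blinfun.add_right blinfun.scaleR_right)
      moreover have "t * (t * blinfun_apply ws w + (1 - t) * blinfun_apply xs w) +
             (1 - t) * (t * blinfun_apply ws x + (1 - t) * blinfun_apply xs x)
             = t * (?A + t * ?B) + (1 - t) * blinfun_apply xs x"
        by (simp add: algebra_simps)
      ultimately have "t * (?A + t * ?B) \<le> t * s" by simp
      thus ?thesis using t by simp
    qed
    hence "?A \<le> s" by (rule real_limit_aux)
    thus "blinfun_apply xs x + blinfun_apply xs w + blinfun_apply ws x - 2 * blinfun_apply xs x - 2 * \<epsilon> \<le> s"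
      using e by simp
  qed
  thus ?thesis using mem_Tbreve[OF hH] r by blast
qed


lemma conv01:
  assumes hH: "h \<in> HH T" and r1: "h (x1, x1s) = ereal r1" and r2: "h (x2, x2s) = ereal r2"
    and a: "0 \<le> a" "a \<le> 1"
  shows "h (a *\<^sub>R x1 + (1 - a) *\<^sub>R x2, a *\<^sub>R x1s + (1 - a) *\<^sub>R x2s) \<le> ereal (a * r1 + (1 - a) * r2)"
proof (cases "a = 0 \<or> a = 1")
  case True thus ?thesis using r1 r2 by auto
next
  case False
  hence a': "0 < a" "a < 1" using a by auto
  have cv: "convex_ereal h" using hH unfolding HH_def by blast
  have "h (a *\<^sub>R (x1, x1s) + (1 - a) *\<^sub>R (x2, x2s)) \<le> ereal a * h (x1, x1s) + ereal (1 - a) * h (x2, x2s)"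
    using cv a' unfolding convex_ereal_def by blast
  moreover have "a *\<^sub>R (x1, x1s) + (1 - a) *\<^sub>R (x2, x2s) = (a *\<^sub>R x1 + (1 - a) *\<^sub>R x2, a *\<^sub>R x1s + (1 - a) *\<^sub>R x2s)"
    by simp
  moreover have "ereal a * h (x1, x1s) + ereal (1 - a) * h (x2, x2s) = ereal (a * r1 + (1 - a) * r2)"
    using r1 r2 by simp
  ultimately show ?thesis by simp
qed

lemma E3_lemma:
  assumes hH: "h \<in> HH T" and e1: "0 \<le> \<epsilon>1" and e2: "0 \<le> \<epsilon>2"
    and m1: "x1s \<in> Tbreve h \<epsilon>1 x1" and m2: "x2s \<in> Tbreve h \<epsilon>2 x2"
    and a: "0 \<le> \<alpha>" "\<alpha> \<le> 1"
  shows "0 \<le> \<alpha> * \<epsilon>1 + (1 - \<alpha>) * \<epsilon>2 + \<alpha> * (1 - \<alpha>) * blinfun_apply (x1s - x2s) (x1 - x2)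
    \<and> \<alpha> *\<^sub>R x1s + (1 - \<alpha>) *\<^sub>R x2s \<in> Tbreve h (\<alpha> * \<epsilon>1 + (1 - \<alpha>) * \<epsilon>2 + \<alpha> * (1 - \<alpha>) * blinfun_apply (x1s - x2s) (x1 - x2)) (\<alpha> *\<^sub>R x1 + (1 - \<alpha>) *\<^sub>R x2)"
proof -
  obtain r1 where r1: "h (x1, x1s) = ereal r1" and R1: "\<And>w ws s. h (w, ws) = ereal s \<Longrightarrow>
        r1 + blinfun_apply x1s w + blinfun_apply ws x1 - 2 * blinfun_apply x1s x1 - 2 * \<epsilon>1 \<le> s"
    using mem_Tbreve[OF hH] m1 by blast
  obtain r2 where r2: "h (x2, x2s) = ereal r2" and R2: "\<And>w ws s. h (w, ws) = ereal s \<Longrightarrow>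
        r2 + blinfun_apply x2s w + blinfun_apply ws x2 - 2 * blinfun_apply x2s x2 - 2 * \<epsilon>2 \<le> s"
    using mem_Tbreve[OF hH] m2 by blast
  define P where "P = blinfun_apply (x1s - x2s) (x1 - x2)"
  have Pe: "P = blinfun_apply x1s x1 - blinfun_apply x1s x2 - blinfun_apply x2s x1 + blinfun_apply x2s x2"
    by (simp add: P_def blinfun.diff_left blinfun.diff_right)
  have "P \<ge> - (\<epsilon>1 + \<epsilon>2)" using R1[OF r2] R2[OF r1] Pe by linarith
  hence "\<alpha> * (1 - \<alpha>) * P \<ge> \<alpha> * (1 - \<alpha>) * (- (\<epsilon>1 + \<epsilon>2))"
    using a by (intro mult_left_mono) auto
  moreover have "\<alpha> * \<epsilon>1 + (1 - \<alpha>) * \<epsilon>2 + \<alpha> * (1 - \<alpha>) * (- (\<epsilon>1 + \<epsilon>2)) = \<alpha> * \<alpha> * \<epsilon>1 + (1 - \<alpha>) * (1 - \<alpha>) * \<epsilon>2"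
    by (simp add: algebra_simps)
  moreover have "\<alpha> * \<alpha> * \<epsilon>1 \<ge> 0" "(1 - \<alpha>) * (1 - \<alpha>) * \<epsilon>2 \<ge> 0" using e1 e2 a by auto
  ultimately have epos: "0 \<le> \<alpha> * \<epsilon>1 + (1 - \<alpha>) * \<epsilon>2 + \<alpha> * (1 - \<alpha>) * P" by linarith
  define xh where "xh = \<alpha> *\<^sub>R x1 + (1 - \<alpha>) *\<^sub>R x2"
  define xhs where "xhs = \<alpha> *\<^sub>R x1s + (1 - \<alpha>) *\<^sub>R x2s"
  define \<epsilon> where "\<epsilon> = \<alpha> * \<epsilon>1 + (1 - \<alpha>) * \<epsilon>2 + \<alpha> * (1 - \<alpha>) * P"
  have hle: "h (xh, xhs) \<le> ereal (\<alpha> * r1 + (1 - \<alpha>) * r2)"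
    unfolding xh_def xhs_def by (rule conv01[OF hH r1 r2 a])
  hence "h (xh, xhs) \<noteq> \<infinity>" by auto
  then obtain rh where rh: "h (xh, xhs) = ereal rh" using HH_fin[OF hH] by blast
  have rhle: "rh \<le> \<alpha> * r1 + (1 - \<alpha>) * r2" using hle rh by simp
  have "\<forall>w ws s. h (w, ws) = ereal s \<longrightarrow>
        rh + blinfun_apply xhs w + blinfun_apply ws xh - 2 * blinfun_apply xhs xh - 2 * \<epsilon> \<le> s"
  proof (intro allI impI)
    fix w ws s assume s: "h (w, ws) = ereal s"
    let ?q1 = "r1 + blinfun_apply x1s w + blinfun_apply ws x1 - 2 * blinfun_apply x1s x1 - 2 * \<epsilon>1"
    let ?q2 = "r2 + blinfun_apply x2s w + blinfun_apply ws x2 - 2 * blinfun_apply x2s x2 - 2 * \<epsilon>2"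
    have q1: "\<alpha> * ?q1 \<le> \<alpha> * s" using R1[OF s] a by (intro mult_left_mono) auto
    have q2: "(1 - \<alpha>) * ?q2 \<le> (1 - \<alpha>) * s" using R2[OF s] a by (intro mult_left_mono) auto
    have eq: "blinfun_apply xhs w + blinfun_apply ws xh - 2 * blinfun_apply xhs xh - 2 * \<epsilon>
      = \<alpha> * (?q1 - r1) + (1 - \<alpha>) * (?q2 - r2)"
      unfolding xhs_def xh_def \<epsilon>_def Pe
      by (simp only: blinfun.add_left blinfun.scaleR_left blinfun.add_right blinfun.scaleR_right)
        (simp add: algebra_simps)
    show "rh + blinfun_apply xhs w + blinfun_apply ws xh - 2 * blinfun_apply xhs xh - 2 * \<epsilon> \<le> s"
      using q1 q2 eq rhle by (simp add: algebra_simps)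
  qed
  hence "xhs \<in> Tbreve h \<epsilon> xh" using mem_Tbreve[OF hH] rh by blast
  thus ?thesis using epos unfolding xhs_def xh_def \<epsilon>_def P_def by blast
qed

theorem proposition3p1:
  fixes T :: "'a::banach \<Rightarrow> ('a \<Rightarrow>\<^sub>L real) set"
    and h :: "'a \<times> ('a \<Rightarrow>\<^sub>L real) \<Rightarrow> ereal"
  assumes "reflexive_space TYPE('a)"
    and "maximal_monotone T"
    and "h \<in> HH T"
  shows "(\<forall>\<epsilon>\<ge>0. \<forall>x. Tbreve h \<epsilon> x = Lg (AA h) \<epsilon> x) \<and> Tbreve h \<in> EE T"
proof
  show "\<forall>\<epsilon>\<ge>0. \<forall>x. Tbreve h \<epsilon> x = Lg (AA h) \<epsilon> x" using part1[OF assms(3)] by blast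
  show "Tbreve h \<in> EE T"
    unfolding EE_def Let_def
  proof (intro CollectI conjI allI impI)
    fix \<epsilon> :: real and x assume "0 \<le> \<epsilon>"
    thus "T x \<subseteq> Tbreve h \<epsilon> x" using E1_lemma[OF assms(3)] by blast
  next
    fix \<epsilon>1 \<epsilon>2 :: real and x assume le: "\<epsilon>1 \<le> \<epsilon>2"
    show "Tbreve h \<epsilon>1 x \<subseteq> Tbreve h \<epsilon>2 x"
    proof
      fix xs assume "xs \<in> Tbreve h \<epsilon>1 x"
      then obtain r where r: "h (x, xs) = ereal r" and R: "\<forall>w ws s. h (w, ws) = ereal s \<longrightarrow>
        r + blinfun_apply xs w + blinfun_apply ws x - 2 * blinfun_apply xs x - 2 * \<epsilon>1 \<le> s"
        using mem_Tbreve[OF assms(3)] by blast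
      have "\<forall>w ws s. h (w, ws) = ereal s \<longrightarrow>
        r + blinfun_apply xs w + blinfun_apply ws x - 2 * blinfun_apply xs x - 2 * \<epsilon>2 \<le> s"
      proof (intro allI impI)
        fix w ws s assume "h (w, ws) = ereal s"
        with R have "r + blinfun_apply xs w + blinfun_apply ws x - 2 * blinfun_apply xs x - 2 * \<epsilon>1 \<le> s" by blast
        thus "r + blinfun_apply xs w + blinfun_apply ws x - 2 * blinfun_apply xs x - 2 * \<epsilon>2 \<le> s" using le by linarith
      qed
      thus "xs \<in> Tbreve h \<epsilon>2 x" using mem_Tbreve[OF assms(3)] r by blast
    qed
  next
    fix \<epsilon>1 \<epsilon>2 x1 x2 x1s x2s and \<alpha> :: real
    assume "0 \<le> \<epsilon>1" "0 \<le> \<epsilon>2" "x1s \<in> Tbreve h \<epsilon>1 x1" "x2s \<in> Tbreve h \<epsilon>2 x2" "0 \<le> \<alpha>" "\<alpha> \<le> 1"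
    note E = E3_lemma[OF assms(3) this]
    show "0 \<le> \<alpha> * \<epsilon>1 + (1 - \<alpha>) * \<epsilon>2 + \<alpha> * (1 - \<alpha>) * blinfun_apply (x1s - x2s) (x1 - x2)" using E by blast
    show "\<alpha> *\<^sub>R x1s + (1 - \<alpha>) *\<^sub>R x2s \<in> Tbreve h (\<alpha> * \<epsilon>1 + (1 - \<alpha>) * \<epsilon>2 + \<alpha> * (1 - \<alpha>) * blinfun_apply (x1s - x2s) (x1 - x2)) (\<alpha> *\<^sub>R x1 + (1 - \<alpha>) *\<^sub>R x2)"
      using E by blast
  qed
qed

end
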